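(* Let $0<\alpha<1$, $\theta>0$, and let $\bar Z^{\alpha,\theta}(t)=(M_1(D_{\alpha,\theta}(t)),\dots,M_q(D_{\alpha,\theta}(t)))$. Then for every $\bar n=(n_1,\dots,n_q)\in\mathbb{N}_0^q$ and $t\ge0$, $$\Pr\{\bar Z^{\alpha,\theta}(t)=\bar n\}=e^{t\theta^\alpha}\sum_{\substack{\Omega(k_i,n_i)\\ i=1,\dots,q}}\sum_{r=0}^\infty\frac{(-t(\lambda+\theta)^\alpha)^r}{r!}\,\frac{\Gamma(\alpha r+1)}{\Gamma\big(\alpha r+1-\sum_{i=1}^q\sum_{j=1}^{k_i}x_{ij}\big)}\prod_{i=1}^q\prod_{j=1}^{k_i}\frac{(-\lambda_{ij}/(\lambda+\theta))^{x_{ij}}}{x_{ij}!}.$$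
   Context: Fix $q\ge1$, integers $k_1,\dots,k_q\ge1$, $\lambda_{ij}>0$ ($1\le i\le q$, $1\le j\le k_i$), $\lambda=\sum_{i,j}\lambda_{ij}$. The MGCP $\bar M(t)=(M_1(t),\dots,M_q(t))$ is the $\mathbb{N}_0^q$-valued process with $\bar M(0)=\bar0$, independent stationary increments and transition probabilities $\Pr\{\bar M(t+h)=\bar n+\bar j\mid\bar M(t)=\bar n\}=\lambda_{ij}h+o(h)$ if $\bar j$ has $i$th entry $j\in\{1,\dots,k_i\}$ and other entries $0$, $1-\lambda h+o(h)$ if $\bar j=\bar0$, $o(h)$ otherwise (equivalently, independent components with joint pgf $\exp(-t\sum_{i,j}\lambda_{ij}(1-u_i^j))$). $\{D_{\alpha,\theta}(t)\}$ is a tempered $\alpha$-stable subordinator independent of $\bar M$: $\mathbb{E}e^{-sD_{\alpha,\theta}(t)}=e^{-t((s+\theta)^\alpha-\theta^\alpha)}$. $\Omega(k_i,n_i)=\{(x_{i1},\dots,x_{ik_i})\in\mathbb{N}_0^{k_i}:\sum_jjx_{ij}=n_i\}$; the outer sum runs over families $(x_{ij})$ with $(x_{i1},\dots,x_{ik_i})\in\Omega(k_i,n_i)$ for each $i$. Convention: $1/\Gamma(z)=0$ for $z\in\{0,-1,-2,\dots\}$. *)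

theory Defs
  imports "HOL-Probability.Probability"
begin

text \<open>Components are indexed by i < q (0-based), jump sizes by j in {1..k i}.
  Vectors in N_0^q are functions nat => nat of which only entries i < q matter.\<close>

definition mgcp_marginals ::
  "'a measure \<Rightarrow> nat \<Rightarrow> (nat \<Rightarrow> nat) \<Rightarrow> (nat \<Rightarrow> nat \<Rightarrow> real)
    \<Rightarrow> (real \<Rightarrow> 'a \<Rightarrow> nat \<Rightarrow> nat) \<Rightarrow> bool" where
  "mgcp_marginals P q k lam M \<longleftrightarrow>
     (\<forall>s i. i < q \<longrightarrow> (\<lambda>\<omega>. M s \<omega> i) \<in> measurable P (count_space UNIV)) \<and>
     (\<forall>s\<ge>0. \<forall>u::nat \<Rightarrow> real. (\<forall>i<q. 0 \<le> u i \<and> u i \<le> 1) \<longrightarrow>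
        integral\<^sup>L P (\<lambda>\<omega>. \<Prod>i<q. u i ^ M s \<omega> i)
          = exp (- s * (\<Sum>i<q. \<Sum>j=1..k i. lam i j * (1 - u i ^ j))))"

definition tss_marginals ::
  "'a measure \<Rightarrow> real \<Rightarrow> real \<Rightarrow> (real \<Rightarrow> 'a \<Rightarrow> real) \<Rightarrow> bool" where
  "tss_marginals P \<alpha> \<theta> D \<longleftrightarrow>
     (\<forall>t\<ge>0. D t \<in> borel_measurable P \<and> (AE \<omega> in P. 0 \<le> D t \<omega>) \<and>
        (\<forall>s\<ge>0. integral\<^sup>L P (\<lambda>\<omega>. exp (- s * D t \<omega>))
                 = exp (- t * ((s + \<theta>) powr \<alpha> - \<theta> powr \<alpha>))))"

text \<open>Pr{ M(D(t)) = n } for D independent of M (conditioning on D(t)):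
  integral of Pr{M(s) = n} against the law of D(t).\<close>
definition subordinated_prob ::
  "'a measure \<Rightarrow> nat \<Rightarrow> (real \<Rightarrow> 'a \<Rightarrow> nat \<Rightarrow> nat) \<Rightarrow> (real \<Rightarrow> 'a \<Rightarrow> real)
    \<Rightarrow> real \<Rightarrow> (nat \<Rightarrow> nat) \<Rightarrow> real" where
  "subordinated_prob P q M D t n =
     integral\<^sup>L (distr P borel (D t))
       (\<lambda>s. if 0 \<le> s then measure P {\<omega> \<in> space P. \<forall>i<q. M s \<omega> i = n i} else 0)"

definition Omega_family :: "nat \<Rightarrow> (nat \<Rightarrow> nat) \<Rightarrow> (nat \<Rightarrow> nat) \<Rightarrow> (nat \<Rightarrow> nat \<Rightarrow> nat) set" where
  "Omega_family q k n = {x. (\<forall>i<q. (\<Sum>j=1..k i. j * x i j) = n i) \<and>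
      (\<forall>i j. \<not> (i < q \<and> 1 \<le> j \<and> j \<le> k i) \<longrightarrow> x i j = 0)}"

end

theory Submission
  imports Defs
begin
lemma powser_coeff_zero:
  fixes c :: "nat \<Rightarrow> real" and \<delta> :: real
  assumes d: "\<delta> > 0" and S: "\<And>v. 0 < v \<Longrightarrow> v \<le> \<delta> \<Longrightarrow> (\<lambda>l. c l * v ^ l) sums 0"
  shows "c m = 0"
proof (induction m rule: less_induct)
  case (less m)
  have h0: "(\<lambda>l. c (l + m) * v ^ l) sums 0" if v: "0 < v" "v \<le> \<delta>" for v
  proof -
    have "(\<lambda>l. c l * v ^ l) sums 0" using S v by auto
    moreover have "(\<Sum>i<m. c i * v ^ i) = 0" using less by simp
    ultimately have "(\<lambda>l. c (l + m) * v ^ (l + m)) sums 0"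
      using sums_iff_shift[of "\<lambda>l. c l * v ^ l" m 0] by simp
    hence "(\<lambda>l. c (l + m) * v ^ (l + m) / v ^ m) sums (0 / v ^ m)" by (rule sums_divide)
    moreover have "c (l + m) * v ^ (l + m) / v ^ m = c (l + m) * v ^ l" for l
      using v by (simp add: power_add)
    ultimately show ?thesis by simp
  qed
  define h where "h = (\<lambda>x::real. \<Sum>l. c (l + m) * x ^ l)"
  have summ: "summable (\<lambda>l. c (l + m) * \<delta> ^ l)" using h0[of \<delta>] d by (simp add: sums_iff)
  have "isCont h 0" unfolding h_def
    by (rule isCont_powser[OF summ]) (use d in simp)
  hence "(h \<longlongrightarrow> h 0) (at_right 0)"
    by (simp add: isCont_def filterlim_at_split)
  moreover have "h 0 = c m" unfolding h_def using powser_zero[of "\<lambda>l. c (l + m)"] by simp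
  moreover have "eventually (\<lambda>x. h x = 0) (at_right 0)"
  proof -
    have "\<exists>b>0. \<forall>y>0. y < b \<longrightarrow> h y = 0"
      using d by (intro exI[of _ \<delta>]) (auto simp: h_def intro!: sums_unique[symmetric] h0)
    thus ?thesis using eventually_at_right[of 0 \<delta>] d by (simp add: eventually_at_right_field)
  qed
  ultimately have "((\<lambda>x. 0) \<longlongrightarrow> c m) (at_right (0::real))"
    using Lim_transform_eventually by fastforce
  thus ?case using tendsto_const tendsto_unique trivial_limit_at_right_real by metis
qed

lemma powser_unique:
  fixes a b :: "nat \<Rightarrow> real" and \<delta> :: real
  assumes d: "\<delta> > 0"
    and A: "\<And>v. 0 < v \<Longrightarrow> v \<le> \<delta> \<Longrightarrow> (\<lambda>l. a l * v ^ l) sums F v"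
    and B: "\<And>v. 0 < v \<Longrightarrow> v \<le> \<delta> \<Longrightarrow> (\<lambda>l. b l * v ^ l) sums F v"
  shows "a m = b m"
proof -
  have "(a - b) m = 0"
  proof (rule powser_coeff_zero[OF d])
    fix v :: real assume "0 < v" "v \<le> \<delta>"
    from sums_diff[OF A[OF this] B[OF this]] show "(\<lambda>l. (a - b) l * v ^ l) sums 0"
      by (simp add: algebra_simps)
  qed
  thus ?thesis by simp
qed

definition Om :: "nat set \<Rightarrow> nat \<Rightarrow> (nat \<Rightarrow> nat) set" where
  "Om J m = {x. (\<Sum>j\<in>J. j * x j) = m \<and> (\<forall>j. j \<notin> J \<longrightarrow> x j = 0)}"

definition Wc :: "nat set \<Rightarrow> (nat \<Rightarrow> real) \<Rightarrow> nat \<Rightarrow> real" where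
  "Wc J a m = (\<Sum>x\<in>Om J m. \<Prod>j\<in>J. a j ^ x j / fact (x j))"

lemma finite_Om:
  assumes "finite J" "0 \<notin> J"
  shows "finite (Om J m)"
proof (rule finite_subset)
  show "Om J m \<subseteq> {f. \<forall>x. (x \<in> J \<longrightarrow> f x \<in> {..m}) \<and> (x \<notin> J \<longrightarrow> f x = 0)}"
  proof (intro subsetI CollectI allI conjI impI)
    fix f x assume f: "f \<in> Om J m"
    { assume x: "x \<in> J"
    have "f x \<le> x * f x" using x assms(2) by (cases x) auto
    also have "\<dots> \<le> (\<Sum>j\<in>J. j * f j)" using x assms(1) by (intro member_le_sum) auto
    finally show "f x \<in> {..m}" using f by (simp add: Om_def) }
    { assume "x \<notin> J" thus "f x = 0" using f by (simp add: Om_def) }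
  qed
  show "finite {f. \<forall>x. (x \<in> J \<longrightarrow> f x \<in> {..m}) \<and> (x \<notin> J \<longrightarrow> f x = (0::nat))}"
    by (rule finite_set_of_finite_funs) (use assms in auto)
qed

lemma Wc_nonneg: "(\<And>j. j \<in> J \<Longrightarrow> a j \<ge> 0) \<Longrightarrow> Wc J a m \<ge> 0"
  unfolding Wc_def by (intro sum_nonneg prod_nonneg) auto

lemma Wc_insert:
  assumes J: "finite J" "i \<notin> J" "0 \<notin> insert i J"
  shows "Wc (insert i J) a m =
    (\<Sum>l\<le>m. (if i dvd l then a i ^ (l div i) / fact (l div i) else 0) * Wc J a (m - l))"
proof -
  have ipos: "i > 0" using J by auto
  define A where "A = {y. i * y \<le> m}"
  have yle: "y \<le> i * y" for y using ipos by (cases i) auto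
  have finA: "finite A" unfolding A_def
    by (rule finite_subset[of _ "{..m}"]) (auto intro: order_trans[OF yle])
  define \<psi> where "\<psi> = (\<lambda>(y::nat, x'::nat\<Rightarrow>nat). x'(i := y))"
  have sJ: "(\<Sum>j\<in>J. j * (x(i := y)) j) = (\<Sum>j\<in>J. j * x j)" for x y
    using J by (intro sum.cong) auto
  have sJ': "(\<Sum>j\<in>J. j * (if j = i then y else x j)) = (\<Sum>j\<in>J. j * x j)" for x y
    using J by (intro sum.cong) auto
  have bij: "bij_betw \<psi> (Sigma A (\<lambda>y. Om J (m - i * y))) (Om (insert i J) m)"
  proof (rule bij_betwI[where g = "\<lambda>x. (x i, x(i := 0))"])
    show "\<psi> \<in> Sigma A (\<lambda>y. Om J (m - i * y)) \<rightarrow> Om (insert i J) m"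
      using J by (auto simp: \<psi>_def Om_def A_def sJ sJ')
    show "(\<lambda>x. (x i, x(i := 0))) \<in> Om (insert i J) m \<rightarrow> Sigma A (\<lambda>y. Om J (m - i * y))"
      using J by (auto simp: Om_def A_def sJ sJ')
    show "(\<lambda>x. (x i, x(i := 0))) (\<psi> z) = z" if "z \<in> Sigma A (\<lambda>y. Om J (m - i * y))" for z
      using that J by (auto simp: \<psi>_def Om_def fun_eq_iff)
    show "\<psi> ((\<lambda>x. (x i, x(i := 0))) x) = x" if "x \<in> Om (insert i J) m" for x
      by (auto simp: \<psi>_def)
  qed
  have "Wc (insert i J) a m = (\<Sum>x\<in>Om (insert i J) m. a i ^ x i / fact (x i) * (\<Prod>j\<in>J. a j ^ x j / fact (x j)))"
    unfolding Wc_def using J by (simp add: prod.insert)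
  also have "\<dots> = (\<Sum>z\<in>Sigma A (\<lambda>y. Om J (m - i * y)).
       a i ^ (\<psi> z) i / fact ((\<psi> z) i) * (\<Prod>j\<in>J. a j ^ (\<psi> z) j / fact ((\<psi> z) j)))"
    by (rule sum.reindex_bij_betw[OF bij, symmetric])
  also have "\<dots> = (\<Sum>z\<in>Sigma A (\<lambda>y. Om J (m - i * y)).
       a i ^ fst z / fact (fst z) * (\<Prod>j\<in>J. a j ^ snd z j / fact (snd z j)))"
    using J by (intro sum.cong refl) (auto simp: \<psi>_def intro!: prod.cong split: if_split_asm)
  also have "\<dots> = (\<Sum>y\<in>A. \<Sum>x'\<in>Om J (m - i * y). a i ^ y / fact y * (\<Prod>j\<in>J. a j ^ x' j / fact (x' j)))"
    using finA finite_Om[of J] J by (subst sum.Sigma) (auto simp: case_prod_unfold)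
  also have "\<dots> = (\<Sum>y\<in>A. a i ^ y / fact y * Wc J a (m - i * y))"
    unfolding Wc_def by (simp add: sum_distrib_left)
  also have "\<dots> = (\<Sum>l\<in>(\<lambda>y. i * y) ` A. (if i dvd l then a i ^ (l div i) / fact (l div i) else 0) * Wc J a (m - l))"
    using ipos by (subst sum.reindex) (auto simp: inj_on_def)
  also have "\<dots> = (\<Sum>l\<le>m. (if i dvd l then a i ^ (l div i) / fact (l div i) else 0) * Wc J a (m - l))"
    by (rule sum.mono_neutral_left) (auto simp: A_def)
  finally show ?thesis .
qed

lemma Wc_sums:
  assumes "finite J" "0 \<notin> J" "\<And>j. j \<in> J \<Longrightarrow> a j \<ge> 0" "v \<ge> 0"
  shows "(\<lambda>m. Wc J a m * v ^ m) sums (\<Prod>j\<in>J. exp (a j * v ^ j))"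
  using assms(1,2,3)
proof (induction J rule: finite_induct)
  case empty
  have "Om {} m = (if m = 0 then {\<lambda>_. 0} else {})" for m
    by (auto simp: Om_def)
  hence "(\<lambda>m. Wc {} a m * v ^ m) = (\<lambda>m. if m = 0 then 1 else 0)"
    by (auto simp: Wc_def fun_eq_iff)
  then show ?case using sums_single[of 0 "\<lambda>_. 1::real"] by simp
next
  case (insert i J)
  have ipos: "i > 0" using insert by auto
  define b where "b l = (if i dvd l then a i ^ (l div i) / fact (l div i) else 0)" for l
  have IH: "(\<lambda>m. Wc J a m * v ^ m) sums (\<Prod>j\<in>J. exp (a j * v ^ j))" using insert by auto
  have bs: "(\<lambda>l. b l * v ^ l) sums exp (a i * v ^ i)"
  proof -
    have "(\<lambda>y. (a i * v ^ i) ^ y /\<^sub>R fact y) sums exp (a i * v ^ i)" by (rule exp_converges)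
    moreover have "(\<lambda>y. (a i * v ^ i) ^ y /\<^sub>R fact y) = (\<lambda>y. b (i * y) * v ^ (i * y))"
    proof
      fix y
      have "(v ^ i) ^ y = v ^ (i * y)" by (simp add: power_mult)
      thus "(a i * v ^ i) ^ y /\<^sub>R fact y = b (i * y) * v ^ (i * y)"
        using ipos by (simp add: b_def power_mult_distrib divide_inverse mult_ac)
    qed
    moreover have "strict_mono (\<lambda>y. i * y)" using ipos by (auto simp: strict_mono_def)
    ultimately show ?thesis
      by (subst sums_mono_reindex[symmetric, of "\<lambda>y. i * y"]) (auto simp: b_def)
  qed
  have bn: "b l * v ^ l \<ge> 0" for l using assms insert by (auto simp: b_def)
  have wn: "Wc J a l * v ^ l \<ge> 0" for l using assms insert Wc_nonneg[of J a] by auto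
  have "(\<lambda>k. \<Sum>l\<le>k. (b l * v ^ l) * (Wc J a (k - l) * v ^ (k - l))) sums
         ((\<Sum>l. b l * v ^ l) * (\<Sum>l. Wc J a l * v ^ l))"
    by (rule Cauchy_product_sums) (use bs IH bn wn in \<open>auto simp: sums_iff\<close>)
  also have "(\<lambda>k. \<Sum>l\<le>k. (b l * v ^ l) * (Wc J a (k - l) * v ^ (k - l))) = (\<lambda>k. Wc (insert i J) a k * v ^ k)"
  proof
    fix k
    have "(\<Sum>l\<le>k. (b l * v ^ l) * (Wc J a (k - l) * v ^ (k - l))) = (\<Sum>l\<le>k. b l * Wc J a (k - l) * v ^ k)"
      by (intro sum.cong refl) (auto simp: power_add[symmetric])
    also have "\<dots> = Wc (insert i J) a k * v ^ k"
      using Wc_insert[of J i a k] insert by (simp add: b_def sum_distrib_right)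
    finally show "(\<Sum>l\<le>k. (b l * v ^ l) * (Wc J a (k - l) * v ^ (k - l))) = Wc (insert i J) a k * v ^ k" .
  qed
  also have "(\<Sum>l. b l * v ^ l) * (\<Sum>l. Wc J a l * v ^ l) = (\<Prod>j\<in>insert i J. exp (a j * v ^ j))"
    using bs IH insert by (simp add: sums_iff)
  finally show ?case .
qed

lemma meas_nat_fun:
  assumes "N \<in> measurable P (count_space UNIV)"
  shows "(\<lambda>\<omega>. f (N \<omega>) :: real) \<in> borel_measurable P"
  using measurable_compose[OF assms, of f borel] by (simp add: measurable_count_space_eq1)

context prob_space begin

lemma series_ind:
  fixes X :: "'a \<Rightarrow> real" and N :: "'a \<Rightarrow> nat"
  assumes X: "X \<in> borel_measurable M" "\<And>\<omega>. \<omega> \<in> space M \<Longrightarrow> 0 \<le> X \<omega> \<and> X \<omega> \<le> 1"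
    and N: "N \<in> measurable M (count_space UNIV)" and v: "0 \<le> v" "v \<le> 1"
  shows "(\<lambda>l. (\<integral>\<omega>. X \<omega> * (if N \<omega> = l then 1 else 0) \<partial>M) * v ^ l) sums (\<integral>\<omega>. X \<omega> * v ^ N \<omega> \<partial>M)"
proof -
  define s where "s n \<omega> = X \<omega> * (if N \<omega> < n then v ^ N \<omega> else 0)" for n \<omega>
  have mi: "(\<lambda>\<omega>. X \<omega> * f (N \<omega>)) \<in> borel_measurable M" for f
    using X(1) meas_nat_fun[OF N] by (intro borel_measurable_times) auto
  have intg: "integrable M (\<lambda>\<omega>. X \<omega> * (if N \<omega> = l then 1 else 0))" for l
    by (rule integrable_const_bound[where B=1]) (use X in \<open>auto intro!: mi\<close>)
  have eq: "(\<Sum>l<n. (\<integral>\<omega>. X \<omega> * (if N \<omega> = l then 1 else 0) \<partial>M) * v ^ l) = integral\<^sup>L M (s n)" for n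
  proof -
    have "(\<Sum>l<n. (\<integral>\<omega>. X \<omega> * (if N \<omega> = l then 1 else 0) \<partial>M) * v ^ l)
        = (\<Sum>l<n. (\<integral>\<omega>. X \<omega> * (if N \<omega> = l then 1 else 0) * v ^ l \<partial>M))"
      by simp
    also have "\<dots> = (\<integral>\<omega>. (\<Sum>l<n. X \<omega> * (if N \<omega> = l then 1 else 0) * v ^ l) \<partial>M)"
      by (rule Bochner_Integration.integral_sum[symmetric, where f = "\<lambda>l \<omega>. X \<omega> * (if N \<omega> = l then 1 else 0) * v ^ l"])
         (auto intro!: integrable_mult_left intg)
    also have "\<dots> = integral\<^sup>L M (s n)"
    proof (rule Bochner_Integration.integral_cong[OF refl])
      fix \<omega>
      have "(\<Sum>l<n. X \<omega> * (if N \<omega> = l then 1 else 0) * v ^ l) = (\<Sum>l<n. if N \<omega> = l then X \<omega> * v ^ l else 0)"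
        by (intro sum.cong) auto
      also have "\<dots> = s n \<omega>" by (simp add: sum.delta s_def)
      finally show "(\<Sum>l<n. X \<omega> * (if N \<omega> = l then 1 else 0) * v ^ l) = s n \<omega>" .
    qed
    finally show ?thesis .
  qed
  have "(\<lambda>n. integral\<^sup>L M (s n)) \<longlonglongrightarrow> (\<integral>\<omega>. X \<omega> * v ^ N \<omega> \<partial>M)"
  proof (rule integral_dominated_convergence[where w = "\<lambda>_. 1"])
    show "(\<lambda>\<omega>. X \<omega> * v ^ N \<omega>) \<in> borel_measurable M" by (rule mi)
    show "s n \<in> borel_measurable M" for n unfolding s_def
      by (rule mi[of "\<lambda>k. if k < n then v ^ k else 0", simplified])
    show "integrable M (\<lambda>_. 1::real)" by simp
    show "AE \<omega> in M. (\<lambda>n. s n \<omega>) \<longlonglongrightarrow> X \<omega> * v ^ N \<omega>"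
    proof (rule AE_I2)
      fix \<omega>
      have "eventually (\<lambda>n. s n \<omega> = X \<omega> * v ^ N \<omega>) sequentially"
        using eventually_gt_at_top[of "N \<omega>"] by eventually_elim (simp add: s_def)
      thus "(\<lambda>n. s n \<omega>) \<longlonglongrightarrow> X \<omega> * v ^ N \<omega>"
        by (rule tendsto_eventually)
    qed
    show "AE \<omega> in M. norm (s n \<omega>) \<le> 1" for n
    proof (rule AE_I2)
      fix \<omega> assume w: "\<omega> \<in> space M"
      have "0 \<le> v ^ N \<omega>" "v ^ N \<omega> \<le> 1" using v by (auto intro: power_le_one)
      thus "norm (s n \<omega>) \<le> 1" using X(2)[OF w] by (auto simp: s_def abs_mult intro: mult_le_one)
    qed
  qed
  thus ?thesis unfolding sums_def eq .
qed

end

context prob_space begin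

lemma coeff_extract:
  fixes N :: "'a \<Rightarrow> nat \<Rightarrow> nat" and g :: "nat \<Rightarrow> real \<Rightarrow> real" and p :: "nat \<Rightarrow> nat \<Rightarrow> real"
  assumes meas: "\<And>i. i < q \<Longrightarrow> (\<lambda>\<omega>. N \<omega> i) \<in> measurable M (count_space UNIV)"
    and pgf: "\<And>u. (\<forall>i<q. 0 \<le> u i \<and> u i \<le> 1) \<Longrightarrow>
                (\<integral>\<omega>. (\<Prod>i<q. u i ^ N \<omega> i) \<partial>M) = (\<Prod>i<q. g i (u i))"
    and ser: "\<And>i v. i < q \<Longrightarrow> 0 \<le> v \<Longrightarrow> v \<le> 1 \<Longrightarrow> (\<lambda>l. p i l * v ^ l) sums g i v"
  shows "j \<le> q \<Longrightarrow> (\<forall>i<q. 0 \<le> u i \<and> u i \<le> 1) \<Longrightarrow>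
    (\<integral>\<omega>. (\<Prod>i<j. if N \<omega> i = m i then 1 else 0) * (\<Prod>i\<in>{j..<q}. u i ^ N \<omega> i) \<partial>M)
      = (\<Prod>i<j. p i (m i)) * (\<Prod>i\<in>{j..<q}. g i (u i))"
proof (induction j arbitrary: u)
  case 0
  then show ?case using pgf[of u] by (simp add: atLeast0LessThan)
next
  case (Suc j)
  have jq: "j < q" using Suc by auto
  define X where "X \<omega> = (\<Prod>i<j. if N \<omega> i = m i then 1 else 0) * (\<Prod>i\<in>{Suc j..<q}. u i ^ N \<omega> i)" for \<omega>
  define A where "A = (\<Prod>i<j. p i (m i))"
  define B where "B = (\<Prod>i\<in>{Suc j..<q}. g i (u i))"
  have Xm: "X \<in> borel_measurable M" unfolding X_def
    by (intro borel_measurable_times borel_measurable_prod meas_nat_fun meas) (use jq in auto)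
  have X01: "0 \<le> X \<omega> \<and> X \<omega> \<le> 1" for \<omega>
  proof -
    have u01: "0 \<le> u i ^ N \<omega> i \<and> u i ^ N \<omega> i \<le> 1" if "i \<in> {Suc j..<q}" for i
      using Suc.prems(2) that by (auto intro: power_le_one)
    have "0 \<le> (\<Prod>i\<in>{Suc j..<q}. u i ^ N \<omega> i)" "(\<Prod>i\<in>{Suc j..<q}. u i ^ N \<omega> i) \<le> 1"
      using u01 by (auto intro: prod_nonneg prod_le_1)
    moreover have "0 \<le> (\<Prod>i<j. if N \<omega> i = m i then 1 else 0 :: real)" "(\<Prod>i<j. if N \<omega> i = m i then 1 else 0 :: real) \<le> 1"
      by (auto intro: prod_nonneg prod_le_1)
    ultimately show ?thesis unfolding X_def by (auto intro: mult_le_one)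
  qed
  have split: "{j..<q} = insert j {Suc j..<q}" using jq by auto
  have key: "(\<lambda>l. (\<integral>\<omega>. X \<omega> * (if N \<omega> j = l then 1 else 0) \<partial>M) * v ^ l) sums (A * g j v * B)"
    if v: "0 < v" "v \<le> 1" for v
  proof -
    define u' where "u' = u(j := v)"
    have u': "\<forall>i<q. 0 \<le> u' i \<and> u' i \<le> 1" using Suc.prems(2) v by (auto simp: u'_def)
    have IH: "(\<integral>\<omega>. (\<Prod>i<j. if N \<omega> i = m i then 1 else 0) * (\<Prod>i\<in>{j..<q}. u' i ^ N \<omega> i) \<partial>M)
      = A * (\<Prod>i\<in>{j..<q}. g i (u' i))" using Suc.IH[OF _ u'] Suc.prems by (simp add: A_def)
    have p1: "(\<Prod>i\<in>{j..<q}. u' i ^ N \<omega> i) = v ^ N \<omega> j * (\<Prod>i\<in>{Suc j..<q}. u i ^ N \<omega> i)" for \<omega>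
      unfolding split by (subst prod.insert) (auto simp: u'_def intro!: prod.cong)
    have p2: "(\<Prod>i\<in>{j..<q}. g i (u' i)) = g j v * B"
      unfolding split B_def by (subst prod.insert) (auto simp: u'_def intro!: prod.cong)
    have "(\<integral>\<omega>. X \<omega> * v ^ N \<omega> j \<partial>M) = A * g j v * B"
      using IH unfolding p1 p2 X_def by (simp add: mult_ac)
    moreover have "(\<lambda>l. (\<integral>\<omega>. X \<omega> * (if N \<omega> j = l then 1 else 0) \<partial>M) * v ^ l) sums (\<integral>\<omega>. X \<omega> * v ^ N \<omega> j \<partial>M)"
      by (rule series_ind[OF Xm]) (use X01 meas jq v in auto)
    ultimately show ?thesis by simp
  qed
  have key2: "(\<lambda>l. (A * p j l * B) * v ^ l) sums (A * g j v * B)" if v: "0 < v" "v \<le> 1" for v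
  proof -
    have "(\<lambda>l. A * (p j l * v ^ l)) sums (A * g j v)" using ser[OF jq] v by (intro sums_mult) auto
    hence "(\<lambda>l. A * (p j l * v ^ l) * B) sums (A * g j v * B)" by (rule sums_mult2)
    thus ?thesis by (simp add: mult_ac)
  qed
  have eq: "(\<integral>\<omega>. X \<omega> * (if N \<omega> j = m j then 1 else 0) \<partial>M) = A * p j (m j) * B"
    by (rule powser_unique[where \<delta> = 1 and F = "\<lambda>v. A * g j v * B"]) (use key key2 in auto)
  have "(\<integral>\<omega>. (\<Prod>i<Suc j. if N \<omega> i = m i then 1 else 0) * (\<Prod>i\<in>{Suc j..<q}. u i ^ N \<omega> i) \<partial>M)
       = (\<integral>\<omega>. X \<omega> * (if N \<omega> j = m j then 1 else 0) \<partial>M)"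
    by (intro Bochner_Integration.integral_cong refl) (simp add: X_def mult_ac)
  also note eq
  finally show ?case by (simp add: A_def B_def mult_ac)
qed

end

lemma prod_indicator_nat:
  fixes q :: nat shows "(\<Prod>i<q. if Q i then 1 else 0 :: real) = (if \<forall>i<q. Q i then 1 else 0)"
  by (induction q) (auto simp: less_Suc_eq)

lemma Omega_family_finite:
  "finite (Omega_family q k n)"
proof (rule finite_subset)
  define K where "K = Max (k ` {..<q})"
  define R where "R = Max (n ` {..<q})"
  define B where "B = {f :: nat \<Rightarrow> nat. \<forall>j. (j \<in> {1..K} \<longrightarrow> f j \<in> {..R}) \<and> (j \<notin> {1..K} \<longrightarrow> f j = 0)}"
  have finB: "finite B" unfolding B_def by (rule finite_set_of_finite_funs) auto
  show "finite {x. \<forall>i. (i \<in> {..<q} \<longrightarrow> x i \<in> B) \<and> (i \<notin> {..<q} \<longrightarrow> x i = (\<lambda>_. 0))}"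
    by (rule finite_set_of_finite_funs) (use finB in auto)
  show "Omega_family q k n \<subseteq> {x. \<forall>i. (i \<in> {..<q} \<longrightarrow> x i \<in> B) \<and> (i \<notin> {..<q} \<longrightarrow> x i = (\<lambda>_. 0))}"
  proof (intro subsetI CollectI allI conjI impI)
    fix x i assume x: "x \<in> Omega_family q k n"
    { assume i: "i \<in> {..<q}"
      have kK: "k i \<le> K" unfolding K_def using i by (intro Max_ge) auto
      have nR: "n i \<le> R" unfolding R_def using i by (intro Max_ge) auto
      show "x i \<in> B" unfolding B_def
      proof (intro CollectI allI conjI impI)
        fix j assume j: "j \<in> {1..K}"
        show "x i j \<in> {..R}"
        proof (cases "j \<le> k i")
          case True
          have "x i j \<le> j * x i j" using j by auto
          also have "\<dots> \<le> (\<Sum>j'=1..k i. j' * x i j')" using j True by (intro member_le_sum) auto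
          also have "\<dots> = n i" using x i by (auto simp: Omega_family_def)
          finally show ?thesis using nR by auto
        next
          case False thus ?thesis using x by (auto simp: Omega_family_def)
        qed
      next
        fix j assume "j \<notin> {1..K}"
        thus "x i j = 0" using x kK by (auto simp: Omega_family_def)
      qed }
    { assume "i \<notin> {..<q}" thus "x i = (\<lambda>_. 0)" using x by (auto simp: Omega_family_def) }
  qed
qed

lemma mgcp_point_prob:
  fixes P :: "'a measure" and M :: "real \<Rightarrow> 'a \<Rightarrow> nat \<Rightarrow> nat"
  assumes P: "prob_space P" and k: "\<forall>i<q. k i \<ge> 1"
    and lam: "\<forall>i<q. \<forall>j\<in>{1..k i}. lam i j > 0"
    and mg: "mgcp_marginals P q k lam M" and s: "s \<ge> 0"
  shows "measure P {\<omega> \<in> space P. \<forall>i<q. M s \<omega> i = n i} =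
    (\<Sum>x\<in>Omega_family q k n. exp (- s * (\<Sum>i<q. \<Sum>j=1..k i. lam i j)) *
        s ^ (\<Sum>i<q. \<Sum>j=1..k i. x i j) * (\<Prod>i<q. \<Prod>j=1..k i. lam i j ^ x i j / fact (x i j)))"
proof -
  define g where "g i v = exp (- s * (\<Sum>j=1..k i. lam i j * (1 - v ^ j)))" for i v
  define p where "p i l = exp (- s * (\<Sum>j=1..k i. lam i j)) * Wc {1..k i} (\<lambda>j. s * lam i j) l" for i l
  have meas: "\<And>i. i < q \<Longrightarrow> (\<lambda>\<omega>. M s \<omega> i) \<in> measurable P (count_space UNIV)"
    using mg by (auto simp: mgcp_marginals_def)
  have pgf: "(\<integral>\<omega>. (\<Prod>i<q. u i ^ M s \<omega> i) \<partial>P) = (\<Prod>i<q. g i (u i))"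
    if "\<forall>i<q. 0 \<le> u i \<and> u i \<le> 1" for u
  proof -
    have "(\<integral>\<omega>. (\<Prod>i<q. u i ^ M s \<omega> i) \<partial>P) = exp (- s * (\<Sum>i<q. \<Sum>j=1..k i. lam i j * (1 - u i ^ j)))"
      using mg s that by (auto simp: mgcp_marginals_def)
    also have "\<dots> = exp (\<Sum>i<q. - s * (\<Sum>j=1..k i. lam i j * (1 - u i ^ j)))"
      by (simp add: sum_distrib_left)
    also have "\<dots> = (\<Prod>i<q. g i (u i))" by (simp add: exp_sum g_def)
    finally show ?thesis .
  qed
  have ser: "(\<lambda>l. p i l * v ^ l) sums g i v" if "i < q" "0 \<le> v" "v \<le> 1" for i v
  proof -
    have "(\<lambda>l. Wc {1..k i} (\<lambda>j. s * lam i j) l * v ^ l) sums (\<Prod>j\<in>{1..k i}. exp (s * lam i j * v ^ j))"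
    proof (rule Wc_sums)
      fix j :: nat assume j: "j \<in> {1..k i}"
      have "0 \<le> lam i j" using lam that(1) j by (auto intro: less_imp_le)
      thus "0 \<le> s * lam i j" using s by simp
    qed (use that in auto)
    hence "(\<lambda>l. exp (- s * (\<Sum>j=1..k i. lam i j)) * (Wc {1..k i} (\<lambda>j. s * lam i j) l * v ^ l)) sums
        (exp (- s * (\<Sum>j=1..k i. lam i j)) * (\<Prod>j\<in>{1..k i}. exp (s * lam i j * v ^ j)))"
      by (rule sums_mult)
    moreover have "exp (- s * (\<Sum>j=1..k i. lam i j)) * (\<Prod>j\<in>{1..k i}. exp (s * lam i j * v ^ j)) = g i v"
    proof -
      have "(\<Prod>j\<in>{1..k i}. exp (s * lam i j * v ^ j)) = exp (\<Sum>j=1..k i. s * lam i j * v ^ j)"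
        by (simp add: exp_sum)
      hence "exp (- s * (\<Sum>j=1..k i. lam i j)) * (\<Prod>j\<in>{1..k i}. exp (s * lam i j * v ^ j))
          = exp (- s * (\<Sum>j=1..k i. lam i j) + (\<Sum>j=1..k i. s * lam i j * v ^ j))"
        by (simp only: exp_add)
      also have "- s * (\<Sum>j=1..k i. lam i j) + (\<Sum>j=1..k i. s * lam i j * v ^ j) = - s * (\<Sum>j=1..k i. lam i j * (1 - v ^ j))"
        by (simp add: sum_distrib_left right_diff_distrib sum_subtractf algebra_simps sum_negf)
      finally show ?thesis by (simp add: g_def)
    qed
    ultimately show ?thesis by (simp add: p_def mult_ac)
  qed
  have CE: "(\<integral>\<omega>. (\<Prod>i<q. if M s \<omega> i = n i then 1 else 0) * (\<Prod>i\<in>{q..<q}. (\<lambda>_. 1::real) i ^ M s \<omega> i) \<partial>P)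
      = (\<Prod>i<q. p i (n i)) * (\<Prod>i\<in>{q..<q}. g i ((\<lambda>_. 1) i))"
    by (rule prob_space.coeff_extract[OF P, where g = g and p = p and N = "M s"])
       (use meas pgf ser in auto)
  have "measure P {\<omega> \<in> space P. \<forall>i<q. M s \<omega> i = n i}
      = (\<integral>\<omega>. indicator {\<omega> \<in> space P. \<forall>i<q. M s \<omega> i = n i} \<omega> \<partial>P)"
    by (simp add: Int_absorb2)
  also have "\<dots> = (\<integral>\<omega>. (\<Prod>i<q. if M s \<omega> i = n i then 1 else 0) \<partial>P)"
    by (intro Bochner_Integration.integral_cong refl) (simp add: prod_indicator_nat indicator_def)
  also have "\<dots> = (\<Prod>i<q. p i (n i))" using CE by simp
  also have "\<dots> = (\<Prod>i<q. exp (- s * (\<Sum>j=1..k i. lam i j))) *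
       (\<Prod>i<q. \<Sum>y\<in>Om {1..k i} (n i). \<Prod>j\<in>{1..k i}. (s * lam i j) ^ y j / fact (y j))"
    by (simp add: p_def Wc_def prod.distrib)
  also have "(\<Prod>i<q. exp (- s * (\<Sum>j=1..k i. lam i j))) = exp (- s * (\<Sum>i<q. \<Sum>j=1..k i. lam i j))"
    by (simp add: exp_sum sum_distrib_left)
  also have "(\<Prod>i<q. \<Sum>y\<in>Om {1..k i} (n i). \<Prod>j\<in>{1..k i}. (s * lam i j) ^ y j / fact (y j))
      = (\<Sum>g\<in>PiE {..<q} (\<lambda>i. Om {1..k i} (n i)). \<Prod>i<q. \<Prod>j\<in>{1..k i}. (s * lam i j) ^ g i j / fact (g i j))"
    by (rule prod_sum_PiE) (auto intro: finite_Om)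
  also have "\<dots> = (\<Sum>x\<in>Omega_family q k n. \<Prod>i<q. \<Prod>j\<in>{1..k i}. (s * lam i j) ^ x i j / fact (x i j))"
  proof -
    define \<phi> where "\<phi> = (\<lambda>g i. if i < q then g i else (\<lambda>_::nat. 0::nat))"
    have bij: "bij_betw \<phi> (PiE {..<q} (\<lambda>i. Om {1..k i} (n i))) (Omega_family q k n)"
    proof (rule bij_betwI[where g = "\<lambda>x. restrict x {..<q}"])
      show "\<phi> \<in> PiE {..<q} (\<lambda>i. Om {1..k i} (n i)) \<rightarrow> Omega_family q k n"
        by (auto simp: \<phi>_def Omega_family_def Om_def PiE_def Pi_def)
      show "(\<lambda>x. restrict x {..<q}) \<in> Omega_family q k n \<rightarrow> PiE {..<q} (\<lambda>i. Om {1..k i} (n i))"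
        by (auto simp: Omega_family_def Om_def PiE_def Pi_def)
      show "restrict (\<phi> g) {..<q} = g" if "g \<in> PiE {..<q} (\<lambda>i. Om {1..k i} (n i))" for g
        using that by (auto simp: \<phi>_def PiE_def extensional_def fun_eq_iff)
      show "\<phi> (restrict x {..<q}) = x" if "x \<in> Omega_family q k n" for x
        using that by (auto simp: \<phi>_def Omega_family_def fun_eq_iff)
    qed
    have "(\<Sum>g\<in>PiE {..<q} (\<lambda>i. Om {1..k i} (n i)). \<Prod>i<q. \<Prod>j\<in>{1..k i}. (s * lam i j) ^ g i j / fact (g i j))
        = (\<Sum>g\<in>PiE {..<q} (\<lambda>i. Om {1..k i} (n i)). \<Prod>i<q. \<Prod>j\<in>{1..k i}. (s * lam i j) ^ \<phi> g i j / fact (\<phi> g i j))"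
      by (intro sum.cong refl prod.cong) (auto simp: \<phi>_def)
    also have "\<dots> = (\<Sum>x\<in>Omega_family q k n. \<Prod>i<q. \<Prod>j\<in>{1..k i}. (s * lam i j) ^ x i j / fact (x i j))"
      by (rule sum.reindex_bij_betw[OF bij])
    finally show ?thesis .
  qed
  also have "\<dots> = (\<Sum>x\<in>Omega_family q k n. s ^ (\<Sum>i<q. \<Sum>j=1..k i. x i j) * (\<Prod>i<q. \<Prod>j=1..k i. lam i j ^ x i j / fact (x i j)))"
    by (intro sum.cong refl) (simp add: power_sum power_mult_distrib prod.distrib[symmetric] mult_ac)
  finally show ?thesis by (simp add: sum_distrib_left mult_ac)
qed

lemma exp_partial_le:
  fixes x :: real assumes "0 \<le> x"
  shows "(\<Sum>m<n. x ^ m / fact m) \<le> exp x"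
proof -
  have s: "(\<lambda>m. x ^ m / fact m) sums exp x"
    using exp_converges[of x] by (simp add: divide_inverse mult_ac)
  have "(\<Sum>m<n. x ^ m / fact m) \<le> (\<Sum>m. x ^ m / fact m)"
    by (rule sum_le_suminf) (use s assms in \<open>auto simp: sums_iff\<close>)
  thus ?thesis using s by (simp add: sums_iff)
qed

lemma exp_term_le:
  fixes x :: real assumes "0 \<le> x"
  shows "x ^ m / fact m \<le> exp x"
proof -
  have "x ^ m / fact m \<le> (\<Sum>j<Suc m. x ^ j / fact j)"
    by (rule member_le_sum) (use assms in auto)
  also have "\<dots> \<le> exp x" by (rule exp_partial_le[OF assms])
  finally show ?thesis .
qed

lemma pow_exp_bound:
  fixes x L :: real assumes "0 \<le> x" "0 < L"
  shows "x ^ m * exp (- L * x) \<le> fact m / L ^ m"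
proof -
  have "(L * x) ^ m / fact m \<le> exp (L * x)" by (rule exp_term_le) (use assms in auto)
  hence "L ^ m * x ^ m \<le> fact m * exp (L * x)"
    by (simp add: power_mult_distrib field_simps)
  hence "L ^ m * (x ^ m * exp (- L * x)) \<le> fact m * (exp (L * x) * exp (- L * x))"
    by (simp add: mult_ac mult_right_mono)
  also have "exp (L * x) * exp (- L * x) = 1" by (simp add: exp_minus_inverse)
  finally show ?thesis using assms by (simp add: field_simps)
qed

context prob_space begin

lemma moment_series:
  fixes X :: "'a \<Rightarrow> real"
  assumes Xm: "X \<in> borel_measurable M" and Xp: "AE \<omega> in M. 0 \<le> X \<omega>"
    and L: "0 < L" and y: "0 \<le> y" "y \<le> L"
  shows "(\<lambda>m. (\<integral>\<omega>. X \<omega> ^ m * exp (- L * X \<omega>) \<partial>M) / fact m * y ^ m) sums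
           (\<integral>\<omega>. exp (- (L - y) * X \<omega>) \<partial>M)"
proof -
  have intg: "integrable M (\<lambda>\<omega>. X \<omega> ^ m * exp (- L * X \<omega>))" for m
  proof (rule integrable_const_bound[where B = "fact m / L ^ m"])
    show "AE \<omega> in M. norm (X \<omega> ^ m * exp (- L * X \<omega>)) \<le> fact m / L ^ m"
      using Xp by eventually_elim (use L pow_exp_bound in \<open>auto simp: abs_mult\<close>)
  qed (use Xm in measurable)
  define s where "s n \<omega> = (\<Sum>m<n. X \<omega> ^ m * exp (- L * X \<omega>) / fact m * y ^ m)" for n \<omega>
  have eq: "(\<Sum>m<n. (\<integral>\<omega>. X \<omega> ^ m * exp (- L * X \<omega>) \<partial>M) / fact m * y ^ m) = integral\<^sup>L M (s n)" for n
  proof -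
    have "(\<Sum>m<n. (\<integral>\<omega>. X \<omega> ^ m * exp (- L * X \<omega>) \<partial>M) / fact m * y ^ m)
        = (\<Sum>m<n. (\<integral>\<omega>. X \<omega> ^ m * exp (- L * X \<omega>) / fact m * y ^ m \<partial>M))"
      by simp
    also have "\<dots> = integral\<^sup>L M (s n)" unfolding s_def
      by (rule Bochner_Integration.integral_sum[symmetric, where f = "\<lambda>m \<omega>. X \<omega> ^ m * exp (- L * X \<omega>) / fact m * y ^ m"])
         (use intg[simplified] intg[of 0, simplified] in \<open>auto intro!: integrable_mult_left integrable_divide\<close>)
    finally show ?thesis .
  qed
  have "(\<lambda>n. integral\<^sup>L M (s n)) \<longlonglongrightarrow> (\<integral>\<omega>. exp (- (L - y) * X \<omega>) \<partial>M)"
  proof (rule integral_dominated_convergence[where w = "\<lambda>_. 1"])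
    show "(\<lambda>\<omega>. exp (- (L - y) * X \<omega>)) \<in> borel_measurable M" using Xm by measurable
    show "s n \<in> borel_measurable M" for n unfolding s_def using Xm by measurable
    show "integrable M (\<lambda>_. 1::real)" by simp
    show "AE \<omega> in M. (\<lambda>n. s n \<omega>) \<longlonglongrightarrow> exp (- (L - y) * X \<omega>)"
    proof (rule AE_I2)
      fix \<omega>
      have "(\<lambda>m. (y * X \<omega>) ^ m /\<^sub>R fact m) sums exp (y * X \<omega>)" by (rule exp_converges)
      hence "(\<lambda>m. exp (- L * X \<omega>) * ((y * X \<omega>) ^ m /\<^sub>R fact m)) sums (exp (- L * X \<omega>) * exp (y * X \<omega>))"
        by (rule sums_mult)
      moreover have "exp (- L * X \<omega>) * exp (y * X \<omega>) = exp (- (L - y) * X \<omega>)"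
        by (simp add: exp_add[symmetric] algebra_simps)
      moreover have "(\<lambda>m. exp (- L * X \<omega>) * ((y * X \<omega>) ^ m /\<^sub>R fact m)) = (\<lambda>m. X \<omega> ^ m * exp (- L * X \<omega>) / fact m * y ^ m)"
        by (simp add: fun_eq_iff power_mult_distrib divide_inverse mult_ac)
      ultimately have "(\<lambda>m. X \<omega> ^ m * exp (- L * X \<omega>) / fact m * y ^ m) sums exp (- (L - y) * X \<omega>)"
        by metis
      thus "(\<lambda>n. s n \<omega>) \<longlonglongrightarrow> exp (- (L - y) * X \<omega>)"
        unfolding sums_def s_def .
    qed
    show "AE \<omega> in M. norm (s n \<omega>) \<le> 1" for n
      using Xp
    proof eventually_elim
      case (elim \<omega>)
      have "s n \<omega> = exp (- L * X \<omega>) * (\<Sum>m<n. (y * X \<omega>) ^ m / fact m)"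
        by (simp add: s_def sum_distrib_left power_mult_distrib mult_ac)
      moreover have "0 \<le> (\<Sum>m<n. (y * X \<omega>) ^ m / fact m)" using elim y by (auto intro!: sum_nonneg)
      moreover have "(\<Sum>m<n. (y * X \<omega>) ^ m / fact m) \<le> exp (y * X \<omega>)" using elim y by (intro exp_partial_le) auto
      moreover have "exp (- L * X \<omega>) * exp (y * X \<omega>) \<le> 1"
      proof -
        have "exp (- L * X \<omega>) * exp (y * X \<omega>) = exp (- ((L - y) * X \<omega>))" by (simp add: exp_add[symmetric] algebra_simps)
        also have "\<dots> \<le> 1" using elim y by auto
        finally show ?thesis .
      qed
      ultimately show ?case
        by (smt (verit) exp_gt_zero mult_left_mono norm_mult real_norm_def abs_of_nonneg mult_nonneg_nonneg)
    qed
  qed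
  thus ?thesis unfolding sums_def eq .
qed

end

lemma gchoose_abs_le:
  fixes a :: real assumes "0 \<le> a"
  shows "\<bar>a gchoose m\<bar> \<le> pochhammer a m / fact m"
proof -
  have "\<bar>a gchoose m\<bar> = (\<Prod>i=0..<m. \<bar>a - of_nat i\<bar>) / fact m"
    by (simp add: gbinomial_prod_rev abs_prod)
  also have "\<dots> \<le> (\<Prod>i=0..<m. a + of_nat i) / fact m"
    by (intro divide_right_mono prod_mono) (use assms in auto)
  also have "\<dots> = pochhammer a m / fact m" by (simp add: pochhammer_prod)
  finally show ?thesis .
qed

lemma pow_powr_nat:
  fixes b c :: real assumes "b > 0"
  shows "b powr (c * real r) = (b powr c) ^ r"
  using assms by (simp add: powr_powr[symmetric] powr_realpow)

lemma exp_sums_real: "(\<lambda>n. x ^ n / fact n) sums exp (x::real)"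
  using exp_converges[of x] by (simp add: divide_inverse mult_ac)

lemma double_series:
  fixes t \<alpha> T y :: real
  assumes t: "t \<ge> 0" and a: "\<alpha> > 0" and y: "0 < y" "y < T"
  defines "F \<equiv> \<lambda>r m. (- t) ^ r / fact r * ((\<alpha> * real r) gchoose m) * (- y) ^ m * T powr (\<alpha> * real r - real m)"
  shows "(\<lambda>m. \<Sum>r. F r m) sums exp (- t * (T - y) powr \<alpha>)"
    and "summable (\<lambda>r. F r m)"
proof -
  have T: "T > 0" using y by auto
  define G where "G r m = t ^ r / fact r * (pochhammer (\<alpha> * real r) m / fact m) * y ^ m * T powr (\<alpha> * real r - real m)" for r m
  define g where "g r = t ^ r / fact r * T powr (2 * (\<alpha> * real r)) * (T - y) powr (- (\<alpha> * real r))" for r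
  have pn: "pochhammer (\<alpha> * real r) m \<ge> 0" for r m
    unfolding pochhammer_prod using a by (intro prod_nonneg) auto
  have Gnn: "G r m \<ge> 0" for r m
    unfolding G_def using t y a pn by (intro mult_nonneg_nonneg divide_nonneg_nonneg) auto
  have FG: "norm (F r m) \<le> G r m" for r m
  proof -
    have "norm (F r m) = t ^ r / fact r * \<bar>(\<alpha> * real r) gchoose m\<bar> * y ^ m * T powr (\<alpha> * real r - real m)"
      unfolding F_def using t y by (simp add: abs_mult power_abs)
    also have "\<dots> \<le> G r m" unfolding G_def using t y a
      by (intro mult_right_mono mult_left_mono gchoose_abs_le) auto
    finally show ?thesis .
  qed
  have Grow: "(\<lambda>m. G r m) sums g r" for r
  proof -
    let ?a = "\<alpha> * real r"
    have "\<bar>- y\<bar> < T" using y by auto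
    from gen_binomial_real'[OF this, of "- ?a"]
    have "(\<lambda>n. (- ?a gchoose n) * (- y) ^ n * T powr (- ?a - real n)) sums (- y + T) powr (- ?a)" .
    hence "(\<lambda>n. t ^ r / fact r * T powr (2 * ?a) * ((- ?a gchoose n) * (- y) ^ n * T powr (- ?a - real n)))
        sums (t ^ r / fact r * T powr (2 * ?a) * (- y + T) powr (- ?a))" by (rule sums_mult)
    moreover have "t ^ r / fact r * T powr (2 * ?a) * ((- ?a gchoose n) * (- y) ^ n * T powr (- ?a - real n)) = G r n" for n
    proof -
      have e1: "(- ?a gchoose n) = (-1) ^ n * pochhammer ?a n / fact n" by (simp add: gbinomial_pochhammer)
      have e2: "(- y) ^ n = (-1) ^ n * y ^ n" by (rule power_minus)
      have e3: "(-1::real) ^ n * (-1) ^ n = 1" by (simp add: power_mult_distrib[symmetric])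
      have "(- ?a gchoose n) * (- y) ^ n = ((-1) ^ n * (-1) ^ n) * (pochhammer ?a n / fact n * y ^ n)"
        unfolding e1 e2 by (simp only: mult_ac times_divide_eq_left times_divide_eq_right)
      hence "(- ?a gchoose n) * (- y) ^ n = pochhammer ?a n / fact n * y ^ n" unfolding e3 by simp
      moreover have "T powr (2 * ?a) * T powr (- ?a - real n) = T powr (?a - real n)"
        by (simp add: powr_add[symmetric])
      ultimately show ?thesis unfolding G_def
      proof -
        assume A: "(- ?a gchoose n) * (- y) ^ n = pochhammer ?a n / fact n * y ^ n"
          and B: "T powr (2 * ?a) * T powr (- ?a - real n) = T powr (?a - real n)"
        have "t ^ r / fact r * T powr (2 * ?a) * ((- ?a gchoose n) * (- y) ^ n * T powr (- ?a - real n))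
            = t ^ r / fact r * ((- ?a gchoose n) * (- y) ^ n) * (T powr (2 * ?a) * T powr (- ?a - real n))"
          by (simp only: mult_ac)
        also have "\<dots> = t ^ r / fact r * (pochhammer ?a n / fact n * y ^ n) * T powr (?a - real n)"
          unfolding A B ..
        finally show "t ^ r / fact r * T powr (2 * ?a) * ((- ?a gchoose n) * (- y) ^ n * T powr (- ?a - real n))
            = t ^ r / fact r * (pochhammer ?a n / fact n) * y ^ n * T powr (?a - real n)"
          by (simp only: mult_ac)
      qed
    qed
    ultimately show ?thesis by (simp add: g_def)
  qed
  have gsum: "summable g"
  proof -
    have "g r = (t * T powr (2 * \<alpha>) * (T - y) powr (- \<alpha>)) ^ r / fact r" for r
    proof -
      have "T powr (2 * (\<alpha> * real r)) = (T powr (2 * \<alpha>)) ^ r"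
        using pow_powr_nat[OF T, of "2 * \<alpha>" r] by (simp add: mult.assoc)
      moreover have "(T - y) powr (- (\<alpha> * real r)) = ((T - y) powr (- \<alpha>)) ^ r"
        using pow_powr_nat[of "T - y" "- \<alpha>" r] y by simp
      ultimately show ?thesis by (simp add: g_def power_mult_distrib)
    qed
    hence "g = (\<lambda>r. (t * T powr (2 * \<alpha>) * (T - y) powr (- \<alpha>)) ^ r / fact r)" by auto
    thus ?thesis using exp_sums_real[of "t * T powr (2 * \<alpha>) * (T - y) powr (- \<alpha>)"]
      by (simp add: sums_iff)
  qed
  have Frow: "(\<lambda>m. F r m) sums ((- t) ^ r / fact r * (T - y) powr (\<alpha> * real r))" for r
  proof -
    let ?a = "\<alpha> * real r"
    have "\<bar>- y\<bar> < T" using y by auto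
    from gen_binomial_real'[OF this, of "?a"]
    have "(\<lambda>n. (?a gchoose n) * (- y) ^ n * T powr (?a - real n)) sums (- y + T) powr ?a" .
    hence "(\<lambda>n. (- t) ^ r / fact r * ((?a gchoose n) * (- y) ^ n * T powr (?a - real n)))
        sums ((- t) ^ r / fact r * (- y + T) powr ?a)" by (rule sums_mult)
    thus ?thesis unfolding F_def by (simp add: mult_ac)
  qed
  have rowsum: "(\<lambda>r. (- t) ^ r / fact r * (T - y) powr (\<alpha> * real r)) sums exp (- t * (T - y) powr \<alpha>)"
  proof -
    have "(- t) ^ r / fact r * (T - y) powr (\<alpha> * real r) = (- t * (T - y) powr \<alpha>) ^ r / fact r" for r
    proof -
      have "(- t * (T - y) powr \<alpha>) ^ r = (- t) ^ r * ((T - y) powr \<alpha>) ^ r" by (rule power_mult_distrib)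
      thus ?thesis using pow_powr_nat[of "T - y" "\<alpha>" r] y by simp
    qed
    thus ?thesis using exp_sums_real[of "- t * (T - y) powr \<alpha>"] by simp
  qed
  have Fnorm_row: "summable (\<lambda>m. norm (F r m))" for r
    by (rule summable_comparison_test'[where g = "G r" and N = 0]) (use Grow FG in \<open>auto simp: sums_iff\<close>)
  have Gsum2: "(\<lambda>(r, m). G r m) summable_on (Sigma UNIV (\<lambda>_. UNIV))"
  proof (rule summable_on_SigmaI[where g = g])
    show "((\<lambda>m. case (r, m) of (r, m) \<Rightarrow> G r m) has_sum g r) UNIV" for r
      using sums_nonneg_imp_has_sum[OF Grow Gnn] by simp
    show "g summable_on UNIV"
      by (rule summable_nonneg_imp_summable_on[OF gsum])
         (use Grow Gnn in \<open>auto intro: sums_le[of "\<lambda>_. 0"]\<close>)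
  qed (use Gnn in auto)
  have Fsum2: "(\<lambda>(r, m). F r m) summable_on (UNIV \<times> UNIV)"
  proof (rule abs_summable_summable)
    show "(\<lambda>x. norm (case x of (r, m) \<Rightarrow> F r m)) summable_on UNIV \<times> UNIV"
    proof (rule Infinite_Sum.abs_summable_on_comparison_test)
      have "(\<lambda>x. norm (case x of (r, m) \<Rightarrow> G r m)) = (\<lambda>(r, m). G r m)"
        using Gnn by (auto simp: fun_eq_iff)
      thus "(\<lambda>x. norm (case x of (r, m) \<Rightarrow> G r m)) summable_on UNIV \<times> UNIV" using Gsum2 by simp
      show "norm (case x of (r, m) \<Rightarrow> F r m) \<le> norm (case x of (r, m) \<Rightarrow> G r m)" for x
        using FG Gnn by (auto simp: case_prod_unfold)
    qed
  qed
  define S where "S = infsum (\<lambda>(r, m). F r m) (UNIV \<times> UNIV)"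
  have hS: "((\<lambda>(r, m). F r m) has_sum S) (UNIV \<times> UNIV)" unfolding S_def using Fsum2 by (rule has_sum_infsum)
  have "((\<lambda>r. (- t) ^ r / fact r * (T - y) powr (\<alpha> * real r)) has_sum S) UNIV"
  proof (rule has_sum_SigmaD[where B = "\<lambda>_. UNIV"])
    show "((\<lambda>(r, m). F r m) has_sum S) (Sigma UNIV (\<lambda>_. UNIV))" using hS by simp
    show "((\<lambda>m. case (r, m) of (r, m) \<Rightarrow> F r m) has_sum (- t) ^ r / fact r * (T - y) powr (\<alpha> * real r)) UNIV" for r
      using norm_summable_imp_has_sum[OF Fnorm_row Frow] by simp
  qed
  hence S: "S = exp (- t * (T - y) powr \<alpha>)" using rowsum by (metis has_sum_imp_sums sums_unique2)
  have hS': "((\<lambda>(m, r). F r m) has_sum S) (Sigma UNIV (\<lambda>_. UNIV))"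
    using has_sum_swap[THEN iffD1, OF hS] by (simp add: case_prod_unfold)
  have sw: "(\<lambda>(m, r). F r m) summable_on (Sigma UNIV (\<lambda>_. UNIV))"
    using hS' unfolding summable_on_def by blast
  have colsum: "(\<lambda>r. F r m) summable_on UNIV" for m
    using summable_on_SigmaD1[where f = "\<lambda>m r. F r m", OF sw] by simp
  have colinf: "infsum (\<lambda>r. F r m) UNIV = (\<Sum>r. F r m)" for m
    using has_sum_imp_sums[OF has_sum_infsum[OF colsum]] by (simp add: sums_iff)
  show "summable (\<lambda>r. F r m)" using summable_on_imp_summable[OF colsum] .
  have "((\<lambda>m. infsum (\<lambda>r. F r m) UNIV) has_sum S) UNIV"
  proof (rule has_sum_SigmaD[where B = "\<lambda>_. UNIV", OF hS'])
    show "((\<lambda>r. case (m, r) of (m, r) \<Rightarrow> F r m) has_sum infsum (\<lambda>r. F r m) UNIV) UNIV" for m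
      using has_sum_infsum[OF colsum] by simp
  qed
  hence "(\<lambda>m. infsum (\<lambda>r. F r m) UNIV) sums S" by (rule has_sum_imp_sums)
  thus "(\<lambda>m. \<Sum>r. F r m) sums exp (- t * (T - y) powr \<alpha>)"
    unfolding colinf S .
qed

context prob_space begin

lemma moment_formula:
  fixes X :: "'a \<Rightarrow> real"
  assumes Xm: "X \<in> borel_measurable M" and Xp: "AE \<omega> in M. 0 \<le> X \<omega>"
    and lap: "\<And>s. s \<ge> 0 \<Longrightarrow> (\<integral>\<omega>. exp (- s * X \<omega>) \<partial>M) = exp (- t * ((s + \<theta>) powr \<alpha> - \<theta> powr \<alpha>))"
    and t: "t \<ge> 0" and a: "\<alpha> > 0" and th: "\<theta> > 0" and L: "L > 0"
  shows "(\<integral>\<omega>. X \<omega> ^ m * exp (- L * X \<omega>) \<partial>M) = fact m * (exp (t * \<theta> powr \<alpha>) *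
     (\<Sum>r. (- t) ^ r / fact r * ((\<alpha> * real r) gchoose m) * (- 1) ^ m * (L + \<theta>) powr (\<alpha> * real r - real m)))"
    and "summable (\<lambda>r. (- t) ^ r / fact r * ((\<alpha> * real r) gchoose m) * (- 1) ^ m * (L + \<theta>) powr (\<alpha> * real r - real m))"
proof -
  define T where "T = L + \<theta>"
  define F' where "F' r m = (- t) ^ r / fact r * ((\<alpha> * real r) gchoose m) * (- 1) ^ m * T powr (\<alpha> * real r - real m)" for r m
  define E0 where "E0 = exp (t * \<theta> powr \<alpha>)"
  have Feq: "(- t) ^ r / fact r * ((\<alpha> * real r) gchoose m) * (- v) ^ m * T powr (\<alpha> * real r - real m)
        = F' r m * v ^ m" for r m v
      by (simp add: F'_def power_minus[of v] mult_ac)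
  have sF': "summable (\<lambda>r. F' r m)" for m
  proof -
    have LT: "L < T" using th by (simp add: T_def)
    have "summable (\<lambda>r. F' r m * L ^ m)" using double_series(2)[OF t a L LT, of m] unfolding Feq .
    hence "summable (\<lambda>r. F' r m * L ^ m / L ^ m)" by (rule summable_divide)
    thus ?thesis using L by simp
  qed
  show "summable (\<lambda>r. (- t) ^ r / fact r * ((\<alpha> * real r) gchoose m) * (- 1) ^ m * (L + \<theta>) powr (\<alpha> * real r - real m))"
    using sF'[of m] by (simp add: F'_def T_def)
  have "(\<integral>\<omega>. X \<omega> ^ m * exp (- L * X \<omega>) \<partial>M) / fact m = E0 * (\<Sum>r. F' r m)"
  proof (rule powser_unique[where \<delta> = L and F = "\<lambda>v. \<integral>\<omega>. exp (- (L - v) * X \<omega>) \<partial>M"])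
    show "0 < L" by fact
    fix v :: real assume v: "0 < v" "v \<le> L"
    show "(\<lambda>m. (\<integral>\<omega>. X \<omega> ^ m * exp (- L * X \<omega>) \<partial>M) / fact m * v ^ m) sums (\<integral>\<omega>. exp (- (L - v) * X \<omega>) \<partial>M)"
      by (rule moment_series[OF Xm Xp L]) (use v in auto)
    have vT: "v < T" using v th by (simp add: T_def)
    note DS = double_series[OF t a v(1) vT]
    have "(\<lambda>m. \<Sum>r. F' r m * v ^ m) sums exp (- t * (T - v) powr \<alpha>)" using DS(1) unfolding Feq .
    hence "(\<lambda>m. (\<Sum>r. F' r m) * v ^ m) sums exp (- t * (T - v) powr \<alpha>)"
      using suminf_mult2[OF sF'] by simp
    hence "(\<lambda>m. E0 * ((\<Sum>r. F' r m) * v ^ m)) sums (E0 * exp (- t * (T - v) powr \<alpha>))" by (rule sums_mult)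
    moreover have "E0 * exp (- t * (T - v) powr \<alpha>) = (\<integral>\<omega>. exp (- (L - v) * X \<omega>) \<partial>M)"
    proof -
      have "(\<integral>\<omega>. exp (- (L - v) * X \<omega>) \<partial>M) = exp (- t * ((L - v + \<theta>) powr \<alpha> - \<theta> powr \<alpha>))"
        using lap[of "L - v"] v by simp
      also have "\<dots> = E0 * exp (- t * (T - v) powr \<alpha>)"
        by (simp add: E0_def T_def exp_add[symmetric] algebra_simps)
      finally show ?thesis by simp
    qed
    ultimately show "(\<lambda>m. E0 * (\<Sum>r. F' r m) * v ^ m) sums (\<integral>\<omega>. exp (- (L - v) * X \<omega>) \<partial>M)"
      by (simp add: mult_ac)
  qed
  thus "(\<integral>\<omega>. X \<omega> ^ m * exp (- L * X \<omega>) \<partial>M) = fact m * (exp (t * \<theta> powr \<alpha>) *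
     (\<Sum>r. (- t) ^ r / fact r * ((\<alpha> * real r) gchoose m) * (- 1) ^ m * (L + \<theta>) powr (\<alpha> * real r - real m)))"
    by (simp add: F'_def T_def E0_def field_simps)
qed

end

lemma fact_gchoose_Gamma:
  fixes a :: real assumes "a \<ge> 0"
  shows "fact m * (a gchoose m) = Gamma (a + 1) * rGamma (a + 1 - real m)"
proof -
  have "a + 1 \<notin> \<int>\<^sub>\<le>\<^sub>0" using assms nonpos_Ints_nonpos by force
  from gbinomial_Gamma[OF this, of m]
  have "fact m * (a gchoose m) = Gamma (a + 1) / Gamma (a - real m + 1)" by simp
  also have "\<dots> = Gamma (a + 1) * rGamma (a + 1 - real m)"
    by (simp add: rGamma_inverse_Gamma divide_inverse algebra_simps)
  finally show ?thesis .
qed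

lemma prod_neg_frac:
  fixes T :: real and q :: nat
  shows "(\<Prod>i<q. \<Prod>j=1..k i. (- lam i j / T) ^ x i j / fact (x i j))
       = (- 1 / T) ^ (\<Sum>i<q. \<Sum>j=1..k i. x i j) * (\<Prod>i<q. \<Prod>j=1..k i. lam i j ^ x i j / fact (x i j))"
proof -
  have "(\<Prod>i<q. \<Prod>j=1..k i. (- lam i j / T) ^ x i j / fact (x i j))
      = (\<Prod>i<q. \<Prod>j=1..k i. (- 1 / T) ^ x i j * (lam i j ^ x i j / fact (x i j)))"
    by (intro prod.cong refl) (simp add: power_mult_distrib[symmetric])
  also have "\<dots> = (- 1 / T) ^ (\<Sum>i<q. \<Sum>j=1..k i. x i j) * (\<Prod>i<q. \<Prod>j=1..k i. lam i j ^ x i j / fact (x i j))"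
    by (simp only: prod.distrib power_sum)
  finally show ?thesis .
qed

lemma term_eq:
  fixes t \<alpha> T C :: real assumes "\<alpha> \<ge> 0" "T > 0"
  shows "(- t * T powr \<alpha>) ^ r / fact r * Gamma (\<alpha> * real r + 1) * rGamma (\<alpha> * real r + 1 - real m)
           * ((- 1 / T) ^ m * C)
       = (C * fact m) * ((- t) ^ r / fact r * ((\<alpha> * real r) gchoose m) * (- 1) ^ m * T powr (\<alpha> * real r - real m))"
proof -
  have g: "Gamma (\<alpha> * real r + 1) * rGamma (\<alpha> * real r + 1 - real m) = fact m * ((\<alpha> * real r) gchoose m)"
    using fact_gchoose_Gamma[of "\<alpha> * real r" m] assms by simp
  have p: "T powr (\<alpha> * real r - real m) = (T powr \<alpha>) ^ r / T ^ m"
    using assms by (simp add: powr_diff pow_powr_nat powr_realpow)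
  have "(- t * T powr \<alpha>) ^ r / fact r * Gamma (\<alpha> * real r + 1) * rGamma (\<alpha> * real r + 1 - real m)
           * ((- 1 / T) ^ m * C)
      = (- t) ^ r * (T powr \<alpha>) ^ r / fact r * (Gamma (\<alpha> * real r + 1) * rGamma (\<alpha> * real r + 1 - real m))
           * ((- 1) ^ m / T ^ m * C)"
    unfolding power_mult_distrib[of "- t" "T powr \<alpha>" r] power_divide[of "- 1" T m] by (simp only: mult.assoc)
  also have "\<dots> = (C * fact m) * ((- t) ^ r / fact r * ((\<alpha> * real r) gchoose m) * (- 1) ^ m * ((T powr \<alpha>) ^ r / T ^ m))"
    unfolding g by (simp add: field_simps)
  finally show ?thesis unfolding p .
qed

theorem mainTheorem13:
  fixes P :: "'a measure" and q :: nat and k :: "nat \<Rightarrow> nat"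
    and lam :: "nat \<Rightarrow> nat \<Rightarrow> real" and \<alpha> \<theta> t :: real
    and M :: "real \<Rightarrow> 'a \<Rightarrow> nat \<Rightarrow> nat" and D :: "real \<Rightarrow> 'a \<Rightarrow> real"
    and n :: "nat \<Rightarrow> nat"
  assumes "prob_space P"
    and "q \<ge> 1" and "\<forall>i<q. k i \<ge> 1"
    and "\<forall>i<q. \<forall>j\<in>{1..k i}. lam i j > 0"
    and "0 < \<alpha>" and "\<alpha> < 1" and "\<theta> > 0"
    and "mgcp_marginals P q k lam M"
    and "tss_marginals P \<alpha> \<theta> D"
    and "t \<ge> 0"
  shows "subordinated_prob P q M D t n =
    (let L = (\<Sum>i<q. \<Sum>j=1..k i. lam i j) in
     exp (t * \<theta> powr \<alpha>) *
     (\<Sum>x\<in>Omega_family q k n.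
        (\<Sum>r. (- t * (L + \<theta>) powr \<alpha>) ^ r / fact r
              * Gamma (\<alpha> * real r + 1)
              * rGamma (\<alpha> * real r + 1 - real (\<Sum>i<q. \<Sum>j=1..k i. x i j))
              * (\<Prod>i<q. \<Prod>j=1..k i. (- lam i j / (L + \<theta>)) ^ x i j / fact (x i j)))))"
proof -
  note P = assms(1)
  interpret prob_space P by (rule P)
  define L where "L = (\<Sum>i<q. \<Sum>j=1..k i. lam i j)"
  define c where "c x = (\<Prod>i<q. \<Prod>j=1..k i. lam i j ^ x i j / fact (x i j))" for x :: "nat \<Rightarrow> nat \<Rightarrow> nat"
  define mx where "mx x = (\<Sum>i<q. \<Sum>j=1..k i. x i j)" for x :: "nat \<Rightarrow> nat \<Rightarrow> nat"
  define OF where "OF = Omega_family q k n"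
  define h where "h s = (if 0 \<le> s then \<Sum>x\<in>OF. exp (- s * L) * s ^ mx x * c x else 0)" for s
  define E0 where "E0 = exp (t * \<theta> powr \<alpha>)"
  define F' where "F' r m = (- t) ^ r / fact r * ((\<alpha> * real r) gchoose m) * (- 1) ^ m * (L + \<theta>) powr (\<alpha> * real r - real m)" for r m
  have Lpos: "L > 0" unfolding L_def
  proof (rule sum_pos)
    have "0 \<in> {..<q}" using assms(2) by auto
    thus "{..<q} \<noteq> {}" by blast
    fix i assume i: "i \<in> {..<q}"
    show "0 < (\<Sum>j=1..k i. lam i j)"
      by (rule sum_pos) (use i assms(3,4) in auto)
  qed auto
  have Dm: "D t \<in> borel_measurable P" and Dp: "AE \<omega> in P. 0 \<le> D t \<omega>"
    and lap: "\<And>s. s \<ge> 0 \<Longrightarrow> (\<integral>\<omega>. exp (- s * D t \<omega>) \<partial>P) = exp (- t * ((s + \<theta>) powr \<alpha> - \<theta> powr \<alpha>))"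
    using assms(9,10) unfolding tss_marginals_def by auto
  have hm: "h \<in> borel_measurable borel" unfolding h_def by measurable
  have eqh: "(\<lambda>s. if 0 \<le> s then measure P {\<omega> \<in> space P. \<forall>i<q. M s \<omega> i = n i} else 0) = h"
  proof
    fix s :: real
    show "(if 0 \<le> s then measure P {\<omega> \<in> space P. \<forall>i<q. M s \<omega> i = n i} else 0) = h s"
      using mgcp_point_prob[OF P assms(3,4,8), of s n]
      by (simp add: h_def OF_def L_def mx_def c_def)
  qed
  have intg: "integrable P (\<lambda>\<omega>. D t \<omega> ^ m * exp (- L * D t \<omega>))" for m
  proof (rule integrable_const_bound[where B = "fact m / L ^ m"])
    show "AE \<omega> in P. norm (D t \<omega> ^ m * exp (- L * D t \<omega>)) \<le> fact m / L ^ m"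
      using Dp by eventually_elim (use Lpos pow_exp_bound in \<open>auto simp: abs_mult\<close>)
  qed (use Dm in measurable)
  have "subordinated_prob P q M D t n = integral\<^sup>L (distr P borel (D t)) h"
    unfolding subordinated_prob_def eqh ..
  also have "\<dots> = (\<integral>\<omega>. h (D t \<omega>) \<partial>P)"
    by (rule integral_distr[OF Dm hm])
  also have "\<dots> = (\<integral>\<omega>. (\<Sum>x\<in>OF. c x * (D t \<omega> ^ mx x * exp (- L * D t \<omega>))) \<partial>P)"
  proof (rule integral_cong_AE)
    show "(\<lambda>\<omega>. h (D t \<omega>)) \<in> borel_measurable P" using hm Dm by measurable
    show "(\<lambda>\<omega>. \<Sum>x\<in>OF. c x * (D t \<omega> ^ mx x * exp (- L * D t \<omega>))) \<in> borel_measurable P" using Dm by measurable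
    show "AE \<omega> in P. h (D t \<omega>) = (\<Sum>x\<in>OF. c x * (D t \<omega> ^ mx x * exp (- L * D t \<omega>)))"
      using Dp by eventually_elim (auto simp: h_def mult_ac intro!: sum.cong)
  qed
  also have "\<dots> = (\<Sum>x\<in>OF. c x * (\<integral>\<omega>. D t \<omega> ^ mx x * exp (- L * D t \<omega>) \<partial>P))"
    by (subst Bochner_Integration.integral_sum) (use intg[simplified] in \<open>auto intro!: integrable_mult_right\<close>)
  also have "\<dots> = (\<Sum>x\<in>OF. c x * (fact (mx x) * (E0 * (\<Sum>r. F' r (mx x)))))"
    using moment_formula(1)[OF Dm Dp lap assms(10) assms(5) assms(7) Lpos]
    by (simp add: E0_def F'_def)
  also have "\<dots> = E0 * (\<Sum>x\<in>OF. (\<Sum>r. (- t * (L + \<theta>) powr \<alpha>) ^ r / fact r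
              * Gamma (\<alpha> * real r + 1) * rGamma (\<alpha> * real r + 1 - real (mx x))
              * (\<Prod>i<q. \<Prod>j=1..k i. (- lam i j / (L + \<theta>)) ^ x i j / fact (x i j))))"
  proof -
    have eachx: "c x * (fact (mx x) * (E0 * (\<Sum>r. F' r (mx x)))) =
      E0 * (\<Sum>r. (- t * (L + \<theta>) powr \<alpha>) ^ r / fact r
              * Gamma (\<alpha> * real r + 1) * rGamma (\<alpha> * real r + 1 - real (mx x))
              * (\<Prod>i<q. \<Prod>j=1..k i. (- lam i j / (L + \<theta>)) ^ x i j / fact (x i j)))" for x
    proof -
      have sF: "summable (\<lambda>r. F' r (mx x))"
        using moment_formula(2)[OF Dm Dp lap assms(10) assms(5) assms(7) Lpos] by (simp add: F'_def)
      have "(\<Sum>r. (- t * (L + \<theta>) powr \<alpha>) ^ r / fact r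
              * Gamma (\<alpha> * real r + 1) * rGamma (\<alpha> * real r + 1 - real (mx x))
              * (\<Prod>i<q. \<Prod>j=1..k i. (- lam i j / (L + \<theta>)) ^ x i j / fact (x i j)))
          = (\<Sum>r. (c x * fact (mx x)) * F' r (mx x))"
      proof (rule suminf_cong)
        fix r
        show "(- t * (L + \<theta>) powr \<alpha>) ^ r / fact r
              * Gamma (\<alpha> * real r + 1) * rGamma (\<alpha> * real r + 1 - real (mx x))
              * (\<Prod>i<q. \<Prod>j=1..k i. (- lam i j / (L + \<theta>)) ^ x i j / fact (x i j))
            = (c x * fact (mx x)) * F' r (mx x)"
          unfolding prod_neg_frac F'_def
          using term_eq[of \<alpha> "L + \<theta>" t r "mx x" "c x"] assms(5,7) Lpos
          by (simp add: mx_def c_def)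
      qed
      also have "\<dots> = (c x * fact (mx x)) * (\<Sum>r. F' r (mx x))"
        by (rule suminf_mult[OF sF])
      finally show ?thesis by (simp add: mult_ac)
    qed
    show ?thesis unfolding sum_distrib_left by (intro sum.cong refl eachx)
  qed
  finally show ?thesis by (simp add: Let_def L_def E0_def OF_def mx_def)
qed

end
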